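(* For $\mathbf{x}=(x_1,\dots,x_N)^{\mathrm T}\in\mathbb{R}^N$ define $$\ell_{\mathrm{bin}}(\mathbf{x})=N\sum_{n=1}^N x_n^4-\Big(\sum_{n=1}^N x_n^2\Big)^2.$$ Then $\ell_{\mathrm{bin}}(\mathbf{x})\ge0$ for all $\mathbf{x}$, and $\ell_{\mathrm{bin}}(\mathbf{x})=0$ if and only if $\mathbf{x}\in\{-\alpha,+\alpha\}^N$ for some $\alpha\in\mathbb{R}$. Furthermore, $\ell_{\mathrm{bin}}$ has no spurious stationary points: $\nabla\ell_{\mathrm{bin}}(\mathbf{x})=\mathbf{0}$ holds only if $\mathbf{x}\in\{-\alpha,+\alpha\}^N$ for some $\alpha\in\mathbb{R}$.
   Context: A spurious stationary point of a differentiable function $\ell$ whose zero set is $\mathcal{X}$ is a point $\mathbf{x}\notin\mathcal{X}$ with $\nabla\ell(\mathbf{x})=\mathbf{0}$. *)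

theory Defs
  imports "HOL-Analysis.Analysis"
begin

definition ell_bin :: "real ^ 'n \<Rightarrow> real" where
  "ell_bin x = real CARD('n) * (\<Sum>n\<in>UNIV. (x $ n) ^ 4) - (\<Sum>n\<in>UNIV. (x $ n) ^ 2) ^ 2"

definition in_pm_cube :: "real \<Rightarrow> real ^ 'n \<Rightarrow> bool" where
  "in_pm_cube \<alpha> x \<longleftrightarrow> (\<forall>n. x $ n \<in> {-\<alpha>, \<alpha>})"

end

theory Submission
  imports Defs
begin
lemma deriv_ell:
  fixes x :: "real ^ 'n"
  shows "(ell_bin has_derivative (\<lambda>h. real CARD('n) * (\<Sum>n\<in>UNIV. 4 * h$n * (x$n)^3)
     - 2 * (\<Sum>n\<in>UNIV. 2 * h$n * x$n) * (\<Sum>n\<in>UNIV. (x $ n) ^ 2))) (at x)"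
  unfolding ell_bin_def[abs_def]
  by (rule derivative_eq_intros bounded_linear_imp_has_derivative[OF bounded_linear_vec_nth] refl | simp)+

lemma sq_identity:
  fixes a :: "'a \<Rightarrow> real" and A :: "'a set"
  assumes "finite A"
  shows "(\<Sum>i\<in>A. \<Sum>j\<in>A. (a i - a j)^2) = 2 * (real (card A) * (\<Sum>i\<in>A. (a i)^2) - (\<Sum>i\<in>A. a i)^2)"
proof -
  have "(\<Sum>i\<in>A. \<Sum>j\<in>A. (a i - a j)^2) = (\<Sum>i\<in>A. \<Sum>j\<in>A. (a i)^2 + (a j)^2 - 2 * a i * a j)"
    by (simp add: power2_diff)
  also have "\<dots> = (\<Sum>i\<in>A. real (card A) * (a i)^2 + (\<Sum>j\<in>A. (a j)^2) - 2 * a i * (\<Sum>j\<in>A. a j))"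
    by (simp add: sum.distrib sum_subtractf sum_distrib_left mult.assoc)
  also have "\<dots> = (\<Sum>i\<in>A. real (card A) * (a i)^2) + (\<Sum>i\<in>A. (\<Sum>j\<in>A. (a j)^2)) - (\<Sum>i\<in>A. 2 * a i * (\<Sum>j\<in>A. a j))"
    by (simp add: sum.distrib sum_subtractf)
  also have "(\<Sum>i\<in>A. real (card A) * (a i)^2) = real (card A) * (\<Sum>i\<in>A. (a i)^2)"
    by (simp add: sum_distrib_left)
  also have "(\<Sum>i\<in>A. (\<Sum>j\<in>A. (a j)^2)) = real (card A) * (\<Sum>i\<in>A. (a i)^2)"
    by simp
  also have "(\<Sum>i\<in>A. 2 * a i * (\<Sum>j\<in>A. a j)) = 2 * (\<Sum>i\<in>A. a i) * (\<Sum>i\<in>A. a i)"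
    by (simp add: sum_distrib_right[symmetric] sum_distrib_left[symmetric])
  also have "real (card A) * (\<Sum>i\<in>A. (a i)^2) + real (card A) * (\<Sum>i\<in>A. (a i)^2) - 2 * (\<Sum>i\<in>A. a i) * (\<Sum>i\<in>A. a i)
     = 2 * (real (card A) * (\<Sum>i\<in>A. (a i)^2) - (\<Sum>i\<in>A. a i)^2)"
    by (simp add: power2_eq_square)
  finally show ?thesis .
qed

lemma ell_eq:
  fixes x :: "real ^ 'n"
  shows "2 * ell_bin x = (\<Sum>i\<in>UNIV. \<Sum>j\<in>UNIV. ((x$i)^2 - (x$j)^2)^2)"
  using sq_identity[of UNIV "\<lambda>i. (x$i)^2"] unfolding ell_bin_def
  by (simp add: power_mult[symmetric])

lemma eq_sq_cube:
  fixes x :: "real ^ 'n"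
  assumes "\<And>i j. (x$i)^2 = (x$j)^2"
  shows "\<exists>\<alpha>. in_pm_cube \<alpha> x"
proof -
  have "\<And>n. x $ n \<in> {- \<bar>x$undefined\<bar>, \<bar>x$undefined\<bar>}"
    using assms by (auto simp: power2_eq_iff abs_if)
  then show ?thesis unfolding in_pm_cube_def by blast
qed

theorem mainTheorem3:
  shows "(\<forall>x :: real ^ 'n. ell_bin x \<ge> 0)
    \<and> (\<forall>x :: real ^ 'n. ell_bin x = 0 \<longleftrightarrow> (\<exists>\<alpha>::real. in_pm_cube \<alpha> x))
    \<and> (\<forall>x :: real ^ 'n. (GDERIV ell_bin x :> 0) \<longrightarrow> (\<exists>\<alpha>::real. in_pm_cube \<alpha> x))"
proof (intro conjI allI impI iffI)
  fix x :: "real ^ 'n"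
  have "0 \<le> (\<Sum>i\<in>UNIV. \<Sum>j\<in>UNIV. ((x$i)^2 - (x$j)^2)^2)"
    by (intro sum_nonneg) simp
  then show "ell_bin x \<ge> 0" using ell_eq[of x] by linarith
next
  fix x :: "real ^ 'n"
  assume "ell_bin x = 0"
  then have z: "(\<Sum>i\<in>UNIV. \<Sum>j\<in>UNIV. ((x$i)^2 - (x$j)^2)^2) = 0" using ell_eq[of x] by simp
  have "\<And>i j. (x$i)^2 = (x$j)^2"
  proof -
    fix i j
    have "(\<Sum>j\<in>UNIV. ((x$i)^2 - (x$j)^2)^2) = 0"
      using z by (subst (asm) sum_nonneg_eq_0_iff) (auto intro: sum_nonneg)
    then have "((x$i)^2 - (x$j)^2)^2 = 0"
      by (subst (asm) sum_nonneg_eq_0_iff) auto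
    then show "(x$i)^2 = (x$j)^2" by simp
  qed
  then show "\<exists>\<alpha>. in_pm_cube \<alpha> x" by (rule eq_sq_cube)
next
  fix x :: "real ^ 'n"
  assume "\<exists>\<alpha>. in_pm_cube \<alpha> x"
  then obtain \<alpha> where a: "\<And>n. x $ n \<in> {-\<alpha>, \<alpha>}" unfolding in_pm_cube_def by blast
  have s: "(x$n)^2 = \<alpha>^2" for n using a[of n] by auto
  have f: "(x$n)^4 = (\<alpha>^2)^2" for n using s[of n] proof -
    have "(x$n)^4 = ((x$n)^2)^2" by (simp flip: power_mult)
    then show ?thesis using s[of n] by simp
  qed
  have e1: "(\<Sum>n\<in>UNIV. (x $ n) ^ 4) = real CARD('n) * (\<alpha>^2)^2" using f by simp
  have e2: "(\<Sum>n\<in>UNIV. (x $ n) ^ 2) = real CARD('n) * \<alpha>^2" using s by simp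
  show "ell_bin x = 0" unfolding ell_bin_def e1 e2 by (simp add: power_mult_distrib power2_eq_square)
next
  fix x :: "real ^ 'n"
  assume g: "GDERIV ell_bin x :> 0"
  define N where "N = real CARD('n)"
  define S where "S = (\<Sum>n\<in>UNIV. (x $ n) ^ 2)"
  have D: "(\<lambda>h. N * (\<Sum>n\<in>UNIV. 4 * h$n * (x$n)^3) - 2 * (\<Sum>n\<in>UNIV. 2 * h$n * x$n) * S) = (\<lambda>h. h \<bullet> 0)"
    using has_derivative_unique[OF deriv_ell[of x] g[unfolded gderiv_def]] unfolding N_def S_def .
  have k: "x$k = 0 \<or> N * (x$k)^2 = S" for k
  proof -
    have "N * (\<Sum>n\<in>UNIV. 4 * axis k 1 $n * (x$n)^3) - 2 * (\<Sum>n\<in>UNIV. 2 * axis k 1 $n * x$n) * S = 0"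
      using fun_cong[OF D, of "axis k 1"] by simp
    moreover have "(\<Sum>n\<in>UNIV. 4 * axis k 1 $n * (x$n)^3) = (\<Sum>n\<in>UNIV. if n = k then 4*(x$k)^3 else 0)"
      by (rule sum.cong) (auto simp: axis_def)
    moreover have "(\<Sum>n\<in>UNIV. 2 * axis k 1 $n * x$n) = (\<Sum>n\<in>UNIV. if n = k then 2*(x$k) else 0)"
      by (rule sum.cong) (auto simp: axis_def)
    ultimately have "N * (4 * (x$k)^3) - 2 * (2 * x$k) * S = 0"
      by simp
    then have "x$k * (N * (x$k)^2 - S) = 0" by (simp add: algebra_simps power3_eq_cube power2_eq_square)
    then show ?thesis by simp
  qed
  have S0: "S \<ge> 0" unfolding S_def by (simp add: sum_nonneg)
  show "\<exists>\<alpha>. in_pm_cube \<alpha> x"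
  proof (cases "S = 0")
    case True
    then have "\<forall>n\<in>UNIV. (x$n)^2 = 0" unfolding S_def
      by (subst (asm) sum_nonneg_eq_0_iff) auto
    then show ?thesis by (intro eq_sq_cube) simp
  next
    case False
    have Npos: "N > 0" unfolding N_def by simp
    have nz: "x$j \<noteq> 0" for j
    proof
      assume x0: "x$j = 0"
      have le: "N * (x$i)^2 \<le> S" for i using k[of i] S0 by auto
      have lt: "N * (x$j)^2 < S" using x0 False S0 by simp
      have "(\<Sum>i\<in>UNIV. N * (x$i)^2) < (\<Sum>i\<in>(UNIV::'n set). S)"
        by (rule sum_strict_mono_ex1) (use le lt in auto)
      moreover have "(\<Sum>i\<in>UNIV. N * (x$i)^2) = N * S" unfolding S_def by (simp add: sum_distrib_left)
      moreover have "(\<Sum>i\<in>(UNIV::'n set). S) = N * S" unfolding N_def by simp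
      ultimately show False by linarith
    qed
    have "(x$i)^2 = S / N" for i using k[of i] nz[of i] Npos by (simp add: field_simps)
    then show ?thesis by (intro eq_sq_cube) simp
  qed
qed
end
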